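(* Let $n\ge0$ and $m\ge n+2$. Then for all formulas $\alpha$ and $\beta$, $\neg\circ^m\alpha\vdash_{L_n^{n+1}}\beta$.
   Context: Formulas are built from a countable set of propositional variables using unary $\neg,\circ$ and binary $\land,\lor,\to$; $\circ^0\alpha=\alpha$, $\circ^{m+1}\alpha=\circ(\circ^m\alpha)$, $\alpha\leftrightarrow\beta:=(\alpha\to\beta)\land(\beta\to\alpha)$. mbC is the Hilbert calculus with the axiom schemas of a standard axiomatization of positive classical propositional logic in $\land,\lor,\to$, plus (TND) $\alpha\lor\neg\alpha$ and (bc1) $\circ\alpha\to(\alpha\to(\neg\alpha\to\beta))$, modus ponens being the only rule; mbCciw is mbC plus (ciw) $\circ\alpha\lor(\alpha\land\neg\alpha)$. For $n\ge0$, $k\ge1$, $L_n^k$ is mbCciw plus (cc$^n$) $\circ^{n+2}\alpha$, (dn) $\neg\neg\alpha\leftrightarrow\alpha$, and (ip$^j$) $\neg\circ^j\neg\alpha\leftrightarrow\neg\circ^j\alpha$ for each $1\le j<k$. $\Gamma\vdash_L\alpha$ denotes derivability of $\alpha$ from $\Gamma$ in $L$. *)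

theory Defs
  imports Main
begin

datatype form =
    PVar nat
  | Neg form
  | Circ form
  | Conj form form
  | Disj form form
  | Imp form form

primrec circ_pow :: "nat \<Rightarrow> form \<Rightarrow> form" where
  "circ_pow 0 a = a"
| "circ_pow (Suc m) a = Circ (circ_pow m a)"

definition Iff :: "form \<Rightarrow> form \<Rightarrow> form" where
  "Iff a b = Conj (Imp a b) (Imp b a)"

inductive pos_ax :: "form \<Rightarrow> bool" where
  Ax1: "pos_ax (Imp a (Imp b a))"
| Ax2: "pos_ax (Imp (Imp a b) (Imp (Imp a (Imp b c)) (Imp a c)))"
| Ax3: "pos_ax (Imp a (Imp b (Conj a b)))"
| Ax4: "pos_ax (Imp (Conj a b) a)"
| Ax5: "pos_ax (Imp (Conj a b) b)"
| Ax6: "pos_ax (Imp a (Disj a b))"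
| Ax7: "pos_ax (Imp b (Disj a b))"
| Ax8: "pos_ax (Imp (Imp a c) (Imp (Imp b c) (Imp (Disj a b) c)))"
| Ax9: "pos_ax (Disj a (Imp a b))"

inductive mbC_ax :: "form \<Rightarrow> bool" where
  pos: "pos_ax a \<Longrightarrow> mbC_ax a"
| TND: "mbC_ax (Disj a (Neg a))"
| bc1: "mbC_ax (Imp (Circ a) (Imp a (Imp (Neg a) b)))"

inductive mbCciw_ax :: "form \<Rightarrow> bool" where
  mbC: "mbC_ax a \<Longrightarrow> mbCciw_ax a"
| ciw: "mbCciw_ax (Disj (Circ a) (Conj a (Neg a)))"

inductive L_ax :: "nat \<Rightarrow> nat \<Rightarrow> form \<Rightarrow> bool" for n k where
  base: "mbCciw_ax a \<Longrightarrow> L_ax n k a"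
| cc: "L_ax n k (circ_pow (n + 2) a)"
| dn: "L_ax n k (Iff (Neg (Neg a)) a)"
| ip: "1 \<le> j \<Longrightarrow> j < k \<Longrightarrow>
        L_ax n k (Iff (Neg (circ_pow j (Neg a))) (Neg (circ_pow j a)))"

inductive derivable :: "(form \<Rightarrow> bool) \<Rightarrow> form set \<Rightarrow> form \<Rightarrow> bool" for Ax where
  prem: "a \<in> \<Gamma> \<Longrightarrow> derivable Ax \<Gamma> a"
| ax: "Ax a \<Longrightarrow> derivable Ax \<Gamma> a"
| mp: "derivable Ax \<Gamma> a \<Longrightarrow> derivable Ax \<Gamma> (Imp a b) \<Longrightarrow> derivable Ax \<Gamma> b"

end

theory Submission
  imports Defs
begin

lemma circ_pow_add: "circ_pow (a + b) x = circ_pow a (circ_pow b x)"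
  by (induction a) auto

lemma cc_inst:
  assumes "m \<ge> n + 2"
  shows "derivable (L_ax n k) G (circ_pow m x)"
proof -
  have "circ_pow m x = circ_pow (n + 2) (circ_pow (m - (n + 2)) x)"
    using assms circ_pow_add[of "n+2" "m - (n+2)" x] by (metis le_add_diff_inverse)
  then show ?thesis by (metis derivable.ax L_ax.cc)
qed

theorem lemma3:
  fixes n m :: nat and \<alpha> \<beta> :: form
  assumes "m \<ge> n + 2"
  shows "derivable (L_ax n (n + 1)) {Neg (circ_pow m \<alpha>)} \<beta>"
proof -
  let ?G = "{Neg (circ_pow m \<alpha>)}"
  let ?L = "L_ax n (n + 1)"
  have b: "derivable ?L ?G (Imp (Circ (circ_pow m \<alpha>)) (Imp (circ_pow m \<alpha>) (Imp (Neg (circ_pow m \<alpha>)) \<beta>)))"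
    by (intro derivable.ax L_ax.base mbCciw_ax.mbC mbC_ax.bc1)
  have c: "derivable ?L ?G (Circ (circ_pow m \<alpha>))"
    using cc_inst[of n "Suc m"] assms by simp
  have p: "derivable ?L ?G (circ_pow m \<alpha>)" using cc_inst assms by blast
  have q: "derivable ?L ?G (Neg (circ_pow m \<alpha>))" by (rule derivable.prem) simp
  show ?thesis using derivable.mp[OF q derivable.mp[OF p derivable.mp[OF c b]]] .
qed

end
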